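(* Let $S'$ be a finite poset that has an induced sub-poset isomorphic to one of the posets $S_6,S_7,S_8$ below. Then there exists a stochastically monotone generator on $S'$ which is not realizably monotone. $S_6=\{a,b,c,d,e,f\}$ with strict relations exactly $a<b,a<c,a<d,a<e,a<f,b<e,c<e,c<f,d<f$. $S_7=\{a,b,c,d,e,f\}$ with strict relations exactly $a<d,a<f,b<e,b<f,c<d,c<e$. $S_8=\{a,b,c,d,e,f\}$ with strict relations exactly $a<e,a<f,b<d,b<e,b<f,c<d,c<e$. *)

theory Defs
  imports Complex_Main
begin

text \<open>Finite posets are modelled by a type of class finite and order (the poset is UNIV).
  A Markov generator (Q-matrix) on it is a real matrix with nonnegative off-diagonal
  entries and zero row sums.\<close>

definition generator :: "('a::finite \<Rightarrow> 'a \<Rightarrow> real) \<Rightarrow> bool" where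
  "generator Q \<longleftrightarrow> (\<forall>x y. x \<noteq> y \<longrightarrow> Q x y \<ge> 0) \<and> (\<forall>x. (\<Sum>y\<in>UNIV. Q x y) = 0)"

definition up_set :: "('a::order) set \<Rightarrow> bool" where
  "up_set U \<longleftrightarrow> (\<forall>x y. x \<in> U \<and> x \<le> y \<longrightarrow> y \<in> U)"

text \<open>Stochastic monotonicity of a generator (Massey's condition): for x \<le> y and every
  up-set U containing both or neither of x, y, the rate into U from x is at most that from y.\<close>

definition stoch_mono_gen :: "('a::{finite,order} \<Rightarrow> 'a \<Rightarrow> real) \<Rightarrow> bool" where
  "stoch_mono_gen Q \<longleftrightarrow> generator Q \<and>
     (\<forall>x y U. x \<le> y \<and> up_set U \<and> (x \<in> U \<longleftrightarrow> y \<in> U) \<longrightarrow>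
        (\<Sum>z\<in>U. Q x z) \<le> (\<Sum>z\<in>U. Q y z))"

definition realizably_mono_gen :: "('a::{finite,order} \<Rightarrow> 'a \<Rightarrow> real) \<Rightarrow> bool" where
  "realizably_mono_gen Q \<longleftrightarrow> generator Q \<and>
     (\<exists>w :: ('a \<Rightarrow> 'a) \<Rightarrow> real.
        (\<forall>f. w f \<ge> 0) \<and> (\<forall>f. \<not> mono f \<longrightarrow> w f = 0) \<and>
        (\<forall>x y. x \<noteq> y \<longrightarrow> Q x y = (\<Sum>f\<in>UNIV. w f * (if f x = y then 1 else 0))))"

text \<open>The six-element posets S6, S7, S8 on labels a..f = 0..5 (given by strict relations).\<close>

definition S6_less :: "(nat \<times> nat) set" where
  "S6_less = {(0,1),(0,2),(0,3),(0,4),(0,5),(1,4),(2,4),(2,5),(3,5)}"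

definition S7_less :: "(nat \<times> nat) set" where
  "S7_less = {(0,3),(0,5),(1,4),(1,5),(2,3),(2,4)}"

definition S8_less :: "(nat \<times> nat) set" where
  "S8_less = {(0,4),(0,5),(1,3),(1,4),(1,5),(2,3),(2,4)}"

definition has_induced_subposet :: "(nat \<times> nat) set \<Rightarrow> 'a::order itself \<Rightarrow> bool" where
  "has_induced_subposet R _ \<longleftrightarrow>
     (\<exists>g :: nat \<Rightarrow> 'a. inj_on g {0..<6} \<and>
        (\<forall>i\<in>{0..<6}. \<forall>j\<in>{0..<6}. (g i \<le> g j \<longleftrightarrow> i = j \<or> (i, j) \<in> R)))"

end

theory Submission
  imports Defs
begin


definition tq :: "'a::order \<Rightarrow> 'a \<Rightarrow> 'a \<Rightarrow> real" where
  "tq L M x = (if L \<le> x \<or> M \<le> x then 1 else 0)"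

definition tp :: "'a::order \<Rightarrow> 'a \<Rightarrow> 'a \<Rightarrow> 'a \<Rightarrow> real" where
  "tp L H M x = (if L \<le> x \<and> x \<le> H then 1 else 1 - tq L M x)"

definition tmpl :: "'a::order \<Rightarrow> 'a \<Rightarrow> 'a \<Rightarrow> 'a \<Rightarrow> 'a \<Rightarrow> real" where
  "tmpl L H M x z = (if z = L then tp L H M x else 0) + (if z = H then tq L M x else 0)
      - (if z = x then tp L H M x + tq L M x else 0)"

lemma tq_mono: "x \<le> y \<Longrightarrow> tq L M x \<le> tq L M y"
  unfolding tq_def using order_trans by fastforce

lemma tp_anti:
  assumes "\<not> M \<le> H" "x \<le> y"
  shows "tp L H M y \<le> tp L H M x"
  using assms unfolding tp_def tq_def
  by (auto intro: order_trans)

lemma ts: "tp L H M x + tq L M x = (if L \<le> x \<and> x \<le> H then 2 else 1)"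
  unfolding tp_def tq_def by auto

lemma tp_nn: "tp L H M x \<ge> 0" unfolding tp_def tq_def by auto
lemma tq_nn: "tq L M x \<ge> 0" unfolding tq_def by auto

lemma tmpl_sum:
  fixes U :: "'a::{finite,order} set"
  shows "(\<Sum>z\<in>U. tmpl L H M x z) = (if L \<in> U then tp L H M x else 0) + (if H \<in> U then tq L M x else 0)
      - (if x \<in> U then tp L H M x + tq L M x else 0)"
proof -
  have f: "finite U" by simp
  show ?thesis
    unfolding tmpl_def sum_subtractf sum.distrib
    using sum.delta[OF f, of L "\<lambda>_. tp L H M x"] sum.delta[OF f, of H "\<lambda>_. tq L M x"]
      sum.delta[OF f, of x "\<lambda>_. tp L H M x + tq L M x"]
    by (simp add: eq_commute[of _ L] eq_commute[of _ H] eq_commute[of _ x])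
qed

lemma tmpl_gen:
  assumes "L < (H::'a::{finite,order})"
  shows "generator (tmpl L H M)"
  unfolding generator_def
proof (intro conjI allI impI)
  fix x y :: 'a assume "x \<noteq> y"
  then show "0 \<le> tmpl L H M x y" unfolding tmpl_def using tp_nn[of L H M x] tq_nn[of L M x] by auto
next
  fix x
  have "(\<Sum>z\<in>UNIV. tmpl L H M x z) = tp L H M x + tq L M x - (tp L H M x + tq L M x)"
    by (subst tmpl_sum) simp
  then show "(\<Sum>z\<in>UNIV. tmpl L H M x z) = 0" by simp
qed

lemma tmpl_mono:
  assumes LH: "L < (H::'a::{finite,order})" and MH: "\<not> M \<le> H"
  shows "stoch_mono_gen (tmpl L H M)"
  unfolding stoch_mono_gen_def
proof (intro conjI allI impI)
  show "generator (tmpl L H M)" using tmpl_gen[OF LH] .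
  fix x y :: 'a and U :: "'a set" assume A: "x \<le> y \<and> up_set U \<and> (x \<in> U) = (y \<in> U)"
  then have xy: "x \<le> y" and up: "up_set U" and eq: "(x \<in> U) = (y \<in> U)" by auto
  have LHU: "L \<in> U \<Longrightarrow> H \<in> U" using up LH unfolding up_set_def by (meson less_imp_le)
  have p: "tp L H M y \<le> tp L H M x" using tp_anti[OF MH xy] .
  have q: "tq L M x \<le> tq L M y" using tq_mono[OF xy] .
  have s2: "\<not> x \<le> H \<Longrightarrow> tp L H M y + tq L M y \<le> tp L H M x + tq L M x"
    unfolding ts using xy order_trans by force
  have s4: "\<not> L \<le> y \<Longrightarrow> tp L H M x + tq L M x \<le> tp L H M y + tq L M y"
    unfolding ts using xy order_trans by force
  show "(\<Sum>z\<in>U. tmpl L H M x z) \<le> (\<Sum>z\<in>U. tmpl L H M y z)"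
  proof (cases "x \<in> U")
    case True
    then have yU: "y \<in> U" using eq by (simp add: tmpl_sum)
    show ?thesis
    proof (cases "L \<in> U")
      case True then show ?thesis using LHU \<open>x\<in>U\<close> yU by (simp add: tmpl_sum)
    next
      case nL: False
      have "\<not> x \<le> L" using nL \<open>x \<in> U\<close> up unfolding up_set_def by auto
      show ?thesis
      proof (cases "H \<in> U")
        case True then show ?thesis using nL \<open>x\<in>U\<close> yU p by (simp add: tmpl_sum)
      next
        case False
        then have "\<not> x \<le> H" using \<open>x \<in> U\<close> up unfolding up_set_def by auto
        then show ?thesis using False nL \<open>x\<in>U\<close> yU s2 by (simp add: tmpl_sum)
      qed
    qed
  next
    case False
    then have yU: "y \<notin> U" using eq by (simp add: tmpl_sum)
    show ?thesis
    proof (cases "L \<in> U")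
      case True
      then have "\<not> L \<le> y" using yU up unfolding up_set_def by auto
      then show ?thesis using True LHU False yU s4 by (simp add: tmpl_sum)
    next
      case nL: False
      show ?thesis using nL False yU q by (simp add: tmpl_sum)
    qed
  qed
qed

lemma not_real_cert:
  fixes Q :: "'a::{finite,order} \<Rightarrow> 'a \<Rightarrow> real"
  assumes R: "realizably_mono_gen Q"
  and d: "x1 \<noteq> y1" "x2 \<noteq> y2" "x3 \<noteq> y3" "u1 \<noteq> v1" "u2 \<noteq> v2"
  and gt: "Q x1 y1 + Q x2 y2 + Q x3 y3 > Q u1 v1 + Q u2 v2"
  and pw: "\<And>f. mono f \<Longrightarrow> (\<And>x y. x \<noteq> y \<Longrightarrow> Q x y = 0 \<Longrightarrow> f x \<noteq> y) \<Longrightarrow>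
      (if f x1 = y1 then 1 else 0) + (if f x2 = y2 then 1 else 0) + (if f x3 = y3 then 1 else 0)
      \<le> (if f u1 = v1 then 1 else 0) + (if f u2 = v2 then (1::real) else 0)"
  shows False
proof -
  obtain w :: "('a \<Rightarrow> 'a) \<Rightarrow> real" where w0: "\<And>f. w f \<ge> 0" and wm: "\<And>f. \<not> mono f \<Longrightarrow> w f = 0"
    and wQ: "\<And>x y. x \<noteq> y \<Longrightarrow> Q x y = (\<Sum>f\<in>UNIV. w f * (if f x = y then 1 else 0))"
    using R unfolding realizably_mono_gen_def by blast
  define I where "I = (\<lambda>(f::'a\<Rightarrow>'a) (x::'a) (y::'a). if f x = y then (1::real) else 0)"
  have supp: "f x \<noteq> y" if "w f \<noteq> 0" "x \<noteq> y" "Q x y = 0" for f :: "'a \<Rightarrow> 'a" and x y :: 'a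
  proof
    assume fx: "f x = y"
    have "w f * (if f x = y then 1 else 0) \<le> (\<Sum>g\<in>UNIV. w g * (if g x = y then 1 else 0))"
      by (rule member_le_sum) (auto intro: mult_nonneg_nonneg w0)
    then have "w f \<le> 0" using fx wQ[OF that(2)] that(3) by simp
    then show False using w0[of f] that(1) by simp
  qed
  have pt: "w f * (I f x1 y1 + I f x2 y2 + I f x3 y3) \<le> w f * (I f u1 v1 + I f u2 v2)" for f
  proof (cases "w f = 0")
    case True then show ?thesis by simp
  next
    case False
    then have "mono f" using wm by blast
    have "I f x1 y1 + I f x2 y2 + I f x3 y3 \<le> I f u1 v1 + I f u2 v2"
      unfolding I_def by (rule pw[OF \<open>mono f\<close>]) (rule supp[OF False])
    then show ?thesis using w0[of f] by (rule mult_left_mono) 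
  qed
  have "(\<Sum>f\<in>UNIV. w f * (I f x1 y1 + I f x2 y2 + I f x3 y3)) \<le> (\<Sum>f\<in>UNIV. w f * (I f u1 v1 + I f u2 v2))"
    by (rule sum_mono) (rule pt)
  moreover have "(\<Sum>f\<in>UNIV. w f * (I f x1 y1 + I f x2 y2 + I f x3 y3)) = Q x1 y1 + Q x2 y2 + Q x3 y3"
    unfolding distrib_left sum.distrib using wQ d unfolding I_def by simp
  moreover have "(\<Sum>f\<in>UNIV. w f * (I f u1 v1 + I f u2 v2)) = Q u1 v1 + Q u2 v2"
    unfolding distrib_left sum.distrib using wQ d unfolding I_def by simp
  ultimately show False using gt by simp
qed

lemma tmpl_supp:
  assumes "L \<noteq> H" "\<And>x y. x \<noteq> y \<Longrightarrow> tmpl L H M x y = 0 \<Longrightarrow> f x \<noteq> y"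
  shows "f x = x \<or> (f x = L \<and> tp L H M x \<noteq> 0) \<or> (f x = H \<and> tq L M x \<noteq> 0)"
proof (rule ccontr)
  assume n: "\<not> ?thesis"
  then have "f x \<noteq> x" by auto
  moreover have "tmpl L H M x (f x) = 0" using n assms(1) unfolding tmpl_def by auto
  ultimately show False using assms(2)[of x "f x"] by auto
qed

lemma caseS6:
  fixes g :: "nat \<Rightarrow> 'a::{finite,order}"
  assumes H: "\<forall>i\<in>{0..<6}. \<forall>j\<in>{0..<6}. (g i \<le> g j \<longleftrightarrow> i = j \<or> (i, j) \<in> S6_less)"
  shows "\<exists>Q :: 'a \<Rightarrow> 'a \<Rightarrow> real. stoch_mono_gen Q \<and> \<not> realizably_mono_gen Q"
proof -
  have le: "\<And>i j. i < 6 \<Longrightarrow> j < 6 \<Longrightarrow> (g i \<le> g j \<longleftrightarrow> i = j \<or> (i, j) \<in> S6_less)"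
    using H by auto
  have r01: "g 0 \<le> g 1" using le[of 0 1] by (simp add: S6_less_def)
  have r02: "g 0 \<le> g 2" using le[of 0 2] by (simp add: S6_less_def)
  have r03: "g 0 \<le> g 3" using le[of 0 3] by (simp add: S6_less_def)
  have r04: "g 0 \<le> g 4" using le[of 0 4] by (simp add: S6_less_def)
  have r05: "g 0 \<le> g 5" using le[of 0 5] by (simp add: S6_less_def)
  have r10: "\<not> g 1 \<le> g 0" using le[of 1 0] by (simp add: S6_less_def)
  have r12: "\<not> g 1 \<le> g 2" using le[of 1 2] by (simp add: S6_less_def)
  have r13: "\<not> g 1 \<le> g 3" using le[of 1 3] by (simp add: S6_less_def)
  have r14: "g 1 \<le> g 4" using le[of 1 4] by (simp add: S6_less_def)
  have r15: "\<not> g 1 \<le> g 5" using le[of 1 5] by (simp add: S6_less_def)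
  have r20: "\<not> g 2 \<le> g 0" using le[of 2 0] by (simp add: S6_less_def)
  have r21: "\<not> g 2 \<le> g 1" using le[of 2 1] by (simp add: S6_less_def)
  have r23: "\<not> g 2 \<le> g 3" using le[of 2 3] by (simp add: S6_less_def)
  have r24: "g 2 \<le> g 4" using le[of 2 4] by (simp add: S6_less_def)
  have r25: "g 2 \<le> g 5" using le[of 2 5] by (simp add: S6_less_def)
  have r30: "\<not> g 3 \<le> g 0" using le[of 3 0] by (simp add: S6_less_def)
  have r31: "\<not> g 3 \<le> g 1" using le[of 3 1] by (simp add: S6_less_def)
  have r32: "\<not> g 3 \<le> g 2" using le[of 3 2] by (simp add: S6_less_def)
  have r34: "\<not> g 3 \<le> g 4" using le[of 3 4] by (simp add: S6_less_def)
  have r35: "g 3 \<le> g 5" using le[of 3 5] by (simp add: S6_less_def)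
  have r40: "\<not> g 4 \<le> g 0" using le[of 4 0] by (simp add: S6_less_def)
  have r41: "\<not> g 4 \<le> g 1" using le[of 4 1] by (simp add: S6_less_def)
  have r42: "\<not> g 4 \<le> g 2" using le[of 4 2] by (simp add: S6_less_def)
  have r43: "\<not> g 4 \<le> g 3" using le[of 4 3] by (simp add: S6_less_def)
  have r45: "\<not> g 4 \<le> g 5" using le[of 4 5] by (simp add: S6_less_def)
  have r50: "\<not> g 5 \<le> g 0" using le[of 5 0] by (simp add: S6_less_def)
  have r51: "\<not> g 5 \<le> g 1" using le[of 5 1] by (simp add: S6_less_def)
  have r52: "\<not> g 5 \<le> g 2" using le[of 5 2] by (simp add: S6_less_def)
  have r53: "\<not> g 5 \<le> g 3" using le[of 5 3] by (simp add: S6_less_def)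
  have r54: "\<not> g 5 \<le> g 4" using le[of 5 4] by (simp add: S6_less_def)
  have n01: "g 0 \<noteq> g 1" using r10 by auto
  have n02: "g 0 \<noteq> g 2" using r20 by auto
  have n03: "g 0 \<noteq> g 3" using r30 by auto
  have n04: "g 0 \<noteq> g 4" using r40 by auto
  have n05: "g 0 \<noteq> g 5" using r50 by auto
  have n10: "g 1 \<noteq> g 0" using r10 by auto
  have n12: "g 1 \<noteq> g 2" using r12 by auto
  have n13: "g 1 \<noteq> g 3" using r13 by auto
  have n14: "g 1 \<noteq> g 4" using r41 by auto
  have n15: "g 1 \<noteq> g 5" using r15 by auto
  have n20: "g 2 \<noteq> g 0" using r20 by auto
  have n21: "g 2 \<noteq> g 1" using r21 by auto
  have n23: "g 2 \<noteq> g 3" using r23 by auto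
  have n24: "g 2 \<noteq> g 4" using r42 by auto
  have n25: "g 2 \<noteq> g 5" using r52 by auto
  have n30: "g 3 \<noteq> g 0" using r30 by auto
  have n31: "g 3 \<noteq> g 1" using r31 by auto
  have n32: "g 3 \<noteq> g 2" using r32 by auto
  have n34: "g 3 \<noteq> g 4" using r34 by auto
  have n35: "g 3 \<noteq> g 5" using r53 by auto
  have n40: "g 4 \<noteq> g 0" using r40 by auto
  have n41: "g 4 \<noteq> g 1" using r41 by auto
  have n42: "g 4 \<noteq> g 2" using r42 by auto
  have n43: "g 4 \<noteq> g 3" using r43 by auto
  have n45: "g 4 \<noteq> g 5" using r45 by auto
  have n50: "g 5 \<noteq> g 0" using r50 by auto
  have n51: "g 5 \<noteq> g 1" using r51 by auto
  have n52: "g 5 \<noteq> g 2" using r52 by auto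
  have n53: "g 5 \<noteq> g 3" using r53 by auto
  have n54: "g 5 \<noteq> g 4" using r54 by auto
  define Q where "Q = tmpl (g 2) (g 4) (g 3)"
  have LH: "g 2 < g 4" using r24 n24 by (simp add: less_le)
  have MH: "\<not> g 3 \<le> g 4" using r34 .
  have SM: "stoch_mono_gen Q" unfolding Q_def using tmpl_mono[OF LH MH] .
  have "\<not> realizably_mono_gen Q"
  proof
    assume RM: "realizably_mono_gen Q"
    show False
    proof (rule not_real_cert[OF RM, of "g 0" "g 2" "g 4" "g 2" "g 2" "g 4" "g 1" "g 2" "g 5" "g 4"])
      show "g 0 \<noteq> g 2" using n02 .
      show "g 4 \<noteq> g 2" using n42 .
      show "g 2 \<noteq> g 4" using n24 .
      show "g 1 \<noteq> g 2" using n12 .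
      show "g 5 \<noteq> g 4" using n54 .
      show "Q (g 1) (g 2) + Q (g 5) (g 4) < Q (g 0) (g 2) + Q (g 4) (g 2) + Q (g 2) (g 4)"
        unfolding Q_def tmpl_def tp_def tq_def using r01 r02 r03 r04 r05 r10 r12 r13 r14 r15 r20 r21 r23 r24 r25 r30 r31 r32 r34 r35 r40 r41 r42 r43 r45 r50 r51 r52 r53 r54 n01 n02 n03 n04 n05 n10 n12 n13 n14 n15 n20 n21 n23 n24 n25 n30 n31 n32 n34 n35 n40 n41 n42 n43 n45 n50 n51 n52 n53 n54 by simp
    next
      fix f :: "'a \<Rightarrow> 'a"
      assume m: "mono f" and sp: "\<And>x y. x \<noteq> y \<Longrightarrow> Q x y = 0 \<Longrightarrow> f x \<noteq> y"

      have f0: "f (g 0) = g 0 \<or> f (g 0) = g 2" using tmpl_supp[where L="g 2" and H="g 4" and M="g 3" and f=f and x="g 0", OF n24 sp[unfolded Q_def]] r01 r02 r03 r04 r05 r10 r12 r13 r14 r15 r20 r21 r23 r24 r25 r30 r31 r32 r34 r35 r40 r41 r42 r43 r45 r50 r51 r52 r53 r54 by (auto simp: tp_def tq_def)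
      have f1: "f (g 1) = g 1 \<or> f (g 1) = g 2" using tmpl_supp[where L="g 2" and H="g 4" and M="g 3" and f=f and x="g 1", OF n24 sp[unfolded Q_def]] r01 r02 r03 r04 r05 r10 r12 r13 r14 r15 r20 r21 r23 r24 r25 r30 r31 r32 r34 r35 r40 r41 r42 r43 r45 r50 r51 r52 r53 r54 by (auto simp: tp_def tq_def)
      have f2: "f (g 2) = g 2 \<or> f (g 2) = g 4" using tmpl_supp[where L="g 2" and H="g 4" and M="g 3" and f=f and x="g 2", OF n24 sp[unfolded Q_def]] r01 r02 r03 r04 r05 r10 r12 r13 r14 r15 r20 r21 r23 r24 r25 r30 r31 r32 r34 r35 r40 r41 r42 r43 r45 r50 r51 r52 r53 r54 by (auto simp: tp_def tq_def)
      have f3: "f (g 3) = g 3 \<or> f (g 3) = g 4" using tmpl_supp[where L="g 2" and H="g 4" and M="g 3" and f=f and x="g 3", OF n24 sp[unfolded Q_def]] r01 r02 r03 r04 r05 r10 r12 r13 r14 r15 r20 r21 r23 r24 r25 r30 r31 r32 r34 r35 r40 r41 r42 r43 r45 r50 r51 r52 r53 r54 by (auto simp: tp_def tq_def)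
      have f4: "f (g 4) = g 4 \<or> f (g 4) = g 2" using tmpl_supp[where L="g 2" and H="g 4" and M="g 3" and f=f and x="g 4", OF n24 sp[unfolded Q_def]] r01 r02 r03 r04 r05 r10 r12 r13 r14 r15 r20 r21 r23 r24 r25 r30 r31 r32 r34 r35 r40 r41 r42 r43 r45 r50 r51 r52 r53 r54 by (auto simp: tp_def tq_def)
      have f5: "f (g 5) = g 5 \<or> f (g 5) = g 4" using tmpl_supp[where L="g 2" and H="g 4" and M="g 3" and f=f and x="g 5", OF n24 sp[unfolded Q_def]] r01 r02 r03 r04 r05 r10 r12 r13 r14 r15 r20 r21 r23 r24 r25 r30 r31 r32 r34 r35 r40 r41 r42 r43 r45 r50 r51 r52 r53 r54 by (auto simp: tp_def tq_def)
      have m01: "f (g 0) \<le> f (g 1)" using m r01 by (simp add: monoD)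
      have m02: "f (g 0) \<le> f (g 2)" using m r02 by (simp add: monoD)
      have m03: "f (g 0) \<le> f (g 3)" using m r03 by (simp add: monoD)
      have m04: "f (g 0) \<le> f (g 4)" using m r04 by (simp add: monoD)
      have m05: "f (g 0) \<le> f (g 5)" using m r05 by (simp add: monoD)
      have m14: "f (g 1) \<le> f (g 4)" using m r14 by (simp add: monoD)
      have m24: "f (g 2) \<le> f (g 4)" using m r24 by (simp add: monoD)
      have m25: "f (g 2) \<le> f (g 5)" using m r25 by (simp add: monoD)
      have m35: "f (g 3) \<le> f (g 5)" using m r35 by (simp add: monoD)
      have i1: "f (g 0) = g 2 \<Longrightarrow> f (g 1) = g 2" using m01 f1 r01 r02 r03 r04 r05 r10 r12 r13 r14 r15 r20 r21 r23 r24 r25 r30 r31 r32 r34 r35 r40 r41 r42 r43 r45 r50 r51 r52 r53 r54 by auto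
      have i2: "f (g 0) = g 2 \<Longrightarrow> f (g 3) = g 4" using m03 f3 r01 r02 r03 r04 r05 r10 r12 r13 r14 r15 r20 r21 r23 r24 r25 r30 r31 r32 r34 r35 r40 r41 r42 r43 r45 r50 r51 r52 r53 r54 by auto
      have i3: "f (g 3) = g 4 \<Longrightarrow> f (g 5) = g 4" using m35 f5 r01 r02 r03 r04 r05 r10 r12 r13 r14 r15 r20 r21 r23 r24 r25 r30 r31 r32 r34 r35 r40 r41 r42 r43 r45 r50 r51 r52 r53 r54 by auto
      have i4: "f (g 4) = g 2 \<Longrightarrow> f (g 1) = g 2" using m14 f1 r01 r02 r03 r04 r05 r10 r12 r13 r14 r15 r20 r21 r23 r24 r25 r30 r31 r32 r34 r35 r40 r41 r42 r43 r45 r50 r51 r52 r53 r54 by auto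
      have i5: "f (g 2) = g 4 \<Longrightarrow> f (g 5) = g 4" using m25 f5 r01 r02 r03 r04 r05 r10 r12 r13 r14 r15 r20 r21 r23 r24 r25 r30 r31 r32 r34 r35 r40 r41 r42 r43 r45 r50 r51 r52 r53 r54 by auto
      have i6: "f (g 2) = g 4 \<Longrightarrow> f (g 4) = g 4" using m24 f4 r01 r02 r03 r04 r05 r10 r12 r13 r14 r15 r20 r21 r23 r24 r25 r30 r31 r32 r34 r35 r40 r41 r42 r43 r45 r50 r51 r52 r53 r54 by auto
      show "(if f (g 0) = g 2 then 1 else 0) + (if f (g 4) = g 2 then 1 else 0) + (if f (g 2) = g 4 then 1 else 0) \<le> (if f (g 1) = g 2 then 1 else 0) + (if f (g 5) = g 4 then (1::real) else 0)"
        using i1 i2 i3 i4 i5 i6 n01 n02 n03 n04 n05 n10 n12 n13 n14 n15 n20 n21 n23 n24 n25 n30 n31 n32 n34 n35 n40 n41 n42 n43 n45 n50 n51 n52 n53 n54 by auto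
    qed
  qed
  then show ?thesis using SM by blast
qed

lemma caseS7:
  fixes g :: "nat \<Rightarrow> 'a::{finite,order}"
  assumes H: "\<forall>i\<in>{0..<6}. \<forall>j\<in>{0..<6}. (g i \<le> g j \<longleftrightarrow> i = j \<or> (i, j) \<in> S7_less)"
  shows "\<exists>Q :: 'a \<Rightarrow> 'a \<Rightarrow> real. stoch_mono_gen Q \<and> \<not> realizably_mono_gen Q"
proof -
  have le: "\<And>i j. i < 6 \<Longrightarrow> j < 6 \<Longrightarrow> (g i \<le> g j \<longleftrightarrow> i = j \<or> (i, j) \<in> S7_less)"
    using H by auto
  have r01: "\<not> g 0 \<le> g 1" using le[of 0 1] by (simp add: S7_less_def)
  have r02: "\<not> g 0 \<le> g 2" using le[of 0 2] by (simp add: S7_less_def)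
  have r03: "g 0 \<le> g 3" using le[of 0 3] by (simp add: S7_less_def)
  have r04: "\<not> g 0 \<le> g 4" using le[of 0 4] by (simp add: S7_less_def)
  have r05: "g 0 \<le> g 5" using le[of 0 5] by (simp add: S7_less_def)
  have r10: "\<not> g 1 \<le> g 0" using le[of 1 0] by (simp add: S7_less_def)
  have r12: "\<not> g 1 \<le> g 2" using le[of 1 2] by (simp add: S7_less_def)
  have r13: "\<not> g 1 \<le> g 3" using le[of 1 3] by (simp add: S7_less_def)
  have r14: "g 1 \<le> g 4" using le[of 1 4] by (simp add: S7_less_def)
  have r15: "g 1 \<le> g 5" using le[of 1 5] by (simp add: S7_less_def)
  have r20: "\<not> g 2 \<le> g 0" using le[of 2 0] by (simp add: S7_less_def)
  have r21: "\<not> g 2 \<le> g 1" using le[of 2 1] by (simp add: S7_less_def)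
  have r23: "g 2 \<le> g 3" using le[of 2 3] by (simp add: S7_less_def)
  have r24: "g 2 \<le> g 4" using le[of 2 4] by (simp add: S7_less_def)
  have r25: "\<not> g 2 \<le> g 5" using le[of 2 5] by (simp add: S7_less_def)
  have r30: "\<not> g 3 \<le> g 0" using le[of 3 0] by (simp add: S7_less_def)
  have r31: "\<not> g 3 \<le> g 1" using le[of 3 1] by (simp add: S7_less_def)
  have r32: "\<not> g 3 \<le> g 2" using le[of 3 2] by (simp add: S7_less_def)
  have r34: "\<not> g 3 \<le> g 4" using le[of 3 4] by (simp add: S7_less_def)
  have r35: "\<not> g 3 \<le> g 5" using le[of 3 5] by (simp add: S7_less_def)
  have r40: "\<not> g 4 \<le> g 0" using le[of 4 0] by (simp add: S7_less_def)
  have r41: "\<not> g 4 \<le> g 1" using le[of 4 1] by (simp add: S7_less_def)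
  have r42: "\<not> g 4 \<le> g 2" using le[of 4 2] by (simp add: S7_less_def)
  have r43: "\<not> g 4 \<le> g 3" using le[of 4 3] by (simp add: S7_less_def)
  have r45: "\<not> g 4 \<le> g 5" using le[of 4 5] by (simp add: S7_less_def)
  have r50: "\<not> g 5 \<le> g 0" using le[of 5 0] by (simp add: S7_less_def)
  have r51: "\<not> g 5 \<le> g 1" using le[of 5 1] by (simp add: S7_less_def)
  have r52: "\<not> g 5 \<le> g 2" using le[of 5 2] by (simp add: S7_less_def)
  have r53: "\<not> g 5 \<le> g 3" using le[of 5 3] by (simp add: S7_less_def)
  have r54: "\<not> g 5 \<le> g 4" using le[of 5 4] by (simp add: S7_less_def)
  have n01: "g 0 \<noteq> g 1" using r01 by auto
  have n02: "g 0 \<noteq> g 2" using r02 by auto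
  have n03: "g 0 \<noteq> g 3" using r30 by auto
  have n04: "g 0 \<noteq> g 4" using r04 by auto
  have n05: "g 0 \<noteq> g 5" using r50 by auto
  have n10: "g 1 \<noteq> g 0" using r10 by auto
  have n12: "g 1 \<noteq> g 2" using r12 by auto
  have n13: "g 1 \<noteq> g 3" using r13 by auto
  have n14: "g 1 \<noteq> g 4" using r41 by auto
  have n15: "g 1 \<noteq> g 5" using r51 by auto
  have n20: "g 2 \<noteq> g 0" using r20 by auto
  have n21: "g 2 \<noteq> g 1" using r21 by auto
  have n23: "g 2 \<noteq> g 3" using r32 by auto
  have n24: "g 2 \<noteq> g 4" using r42 by auto
  have n25: "g 2 \<noteq> g 5" using r25 by auto
  have n30: "g 3 \<noteq> g 0" using r30 by auto
  have n31: "g 3 \<noteq> g 1" using r31 by auto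
  have n32: "g 3 \<noteq> g 2" using r32 by auto
  have n34: "g 3 \<noteq> g 4" using r34 by auto
  have n35: "g 3 \<noteq> g 5" using r35 by auto
  have n40: "g 4 \<noteq> g 0" using r40 by auto
  have n41: "g 4 \<noteq> g 1" using r41 by auto
  have n42: "g 4 \<noteq> g 2" using r42 by auto
  have n43: "g 4 \<noteq> g 3" using r43 by auto
  have n45: "g 4 \<noteq> g 5" using r45 by auto
  have n50: "g 5 \<noteq> g 0" using r50 by auto
  have n51: "g 5 \<noteq> g 1" using r51 by auto
  have n52: "g 5 \<noteq> g 2" using r52 by auto
  have n53: "g 5 \<noteq> g 3" using r53 by auto
  have n54: "g 5 \<noteq> g 4" using r54 by auto
  define Q where "Q = tmpl (g 2) (g 4) (g 5)"
  have LH: "g 2 < g 4" using r24 n24 by (simp add: less_le)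
  have MH: "\<not> g 5 \<le> g 4" using r54 .
  have SM: "stoch_mono_gen Q" unfolding Q_def using tmpl_mono[OF LH MH] .
  have "\<not> realizably_mono_gen Q"
  proof
    assume RM: "realizably_mono_gen Q"
    show False
    proof (rule not_real_cert[OF RM, of "g 2" "g 4" "g 4" "g 2" "g 0" "g 2" "g 5" "g 4" "g 0" "g 2"])
      show "g 2 \<noteq> g 4" using n24 .
      show "g 4 \<noteq> g 2" using n42 .
      show "g 0 \<noteq> g 2" using n02 .
      show "g 5 \<noteq> g 4" using n54 .
      show "g 0 \<noteq> g 2" using n02 .
      show "Q (g 5) (g 4) + Q (g 0) (g 2) < Q (g 2) (g 4) + Q (g 4) (g 2) + Q (g 0) (g 2)"
        unfolding Q_def tmpl_def tp_def tq_def using r01 r02 r03 r04 r05 r10 r12 r13 r14 r15 r20 r21 r23 r24 r25 r30 r31 r32 r34 r35 r40 r41 r42 r43 r45 r50 r51 r52 r53 r54 n01 n02 n03 n04 n05 n10 n12 n13 n14 n15 n20 n21 n23 n24 n25 n30 n31 n32 n34 n35 n40 n41 n42 n43 n45 n50 n51 n52 n53 n54 by simp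
    next
      fix f :: "'a \<Rightarrow> 'a"
      assume m: "mono f" and sp: "\<And>x y. x \<noteq> y \<Longrightarrow> Q x y = 0 \<Longrightarrow> f x \<noteq> y"

      have f0: "f (g 0) = g 0 \<or> f (g 0) = g 2" using tmpl_supp[where L="g 2" and H="g 4" and M="g 5" and f=f and x="g 0", OF n24 sp[unfolded Q_def]] r01 r02 r03 r04 r05 r10 r12 r13 r14 r15 r20 r21 r23 r24 r25 r30 r31 r32 r34 r35 r40 r41 r42 r43 r45 r50 r51 r52 r53 r54 by (auto simp: tp_def tq_def)
      have f1: "f (g 1) = g 1 \<or> f (g 1) = g 2" using tmpl_supp[where L="g 2" and H="g 4" and M="g 5" and f=f and x="g 1", OF n24 sp[unfolded Q_def]] r01 r02 r03 r04 r05 r10 r12 r13 r14 r15 r20 r21 r23 r24 r25 r30 r31 r32 r34 r35 r40 r41 r42 r43 r45 r50 r51 r52 r53 r54 by (auto simp: tp_def tq_def)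
      have f2: "f (g 2) = g 2 \<or> f (g 2) = g 4" using tmpl_supp[where L="g 2" and H="g 4" and M="g 5" and f=f and x="g 2", OF n24 sp[unfolded Q_def]] r01 r02 r03 r04 r05 r10 r12 r13 r14 r15 r20 r21 r23 r24 r25 r30 r31 r32 r34 r35 r40 r41 r42 r43 r45 r50 r51 r52 r53 r54 by (auto simp: tp_def tq_def)
      have f3: "f (g 3) = g 3 \<or> f (g 3) = g 4" using tmpl_supp[where L="g 2" and H="g 4" and M="g 5" and f=f and x="g 3", OF n24 sp[unfolded Q_def]] r01 r02 r03 r04 r05 r10 r12 r13 r14 r15 r20 r21 r23 r24 r25 r30 r31 r32 r34 r35 r40 r41 r42 r43 r45 r50 r51 r52 r53 r54 by (auto simp: tp_def tq_def)
      have f4: "f (g 4) = g 4 \<or> f (g 4) = g 2" using tmpl_supp[where L="g 2" and H="g 4" and M="g 5" and f=f and x="g 4", OF n24 sp[unfolded Q_def]] r01 r02 r03 r04 r05 r10 r12 r13 r14 r15 r20 r21 r23 r24 r25 r30 r31 r32 r34 r35 r40 r41 r42 r43 r45 r50 r51 r52 r53 r54 by (auto simp: tp_def tq_def)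
      have f5: "f (g 5) = g 5 \<or> f (g 5) = g 4" using tmpl_supp[where L="g 2" and H="g 4" and M="g 5" and f=f and x="g 5", OF n24 sp[unfolded Q_def]] r01 r02 r03 r04 r05 r10 r12 r13 r14 r15 r20 r21 r23 r24 r25 r30 r31 r32 r34 r35 r40 r41 r42 r43 r45 r50 r51 r52 r53 r54 by (auto simp: tp_def tq_def)
      have m03: "f (g 0) \<le> f (g 3)" using m r03 by (simp add: monoD)
      have m05: "f (g 0) \<le> f (g 5)" using m r05 by (simp add: monoD)
      have m14: "f (g 1) \<le> f (g 4)" using m r14 by (simp add: monoD)
      have m15: "f (g 1) \<le> f (g 5)" using m r15 by (simp add: monoD)
      have m23: "f (g 2) \<le> f (g 3)" using m r23 by (simp add: monoD)
      have m24: "f (g 2) \<le> f (g 4)" using m r24 by (simp add: monoD)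
      have i1: "f (g 2) = g 4 \<Longrightarrow> f (g 3) = g 4" using m23 f3 r01 r02 r03 r04 r05 r10 r12 r13 r14 r15 r20 r21 r23 r24 r25 r30 r31 r32 r34 r35 r40 r41 r42 r43 r45 r50 r51 r52 r53 r54 by auto
      have i2: "f (g 3) = g 4 \<Longrightarrow> f (g 0) = g 2" using m03 f0 r01 r02 r03 r04 r05 r10 r12 r13 r14 r15 r20 r21 r23 r24 r25 r30 r31 r32 r34 r35 r40 r41 r42 r43 r45 r50 r51 r52 r53 r54 by auto
      have i3: "f (g 0) = g 2 \<Longrightarrow> f (g 5) = g 4" using m05 f5 r01 r02 r03 r04 r05 r10 r12 r13 r14 r15 r20 r21 r23 r24 r25 r30 r31 r32 r34 r35 r40 r41 r42 r43 r45 r50 r51 r52 r53 r54 by auto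
      have i4: "f (g 4) = g 2 \<Longrightarrow> f (g 1) = g 2" using m14 f1 r01 r02 r03 r04 r05 r10 r12 r13 r14 r15 r20 r21 r23 r24 r25 r30 r31 r32 r34 r35 r40 r41 r42 r43 r45 r50 r51 r52 r53 r54 by auto
      have i5: "f (g 1) = g 2 \<Longrightarrow> f (g 5) = g 4" using m15 f5 r01 r02 r03 r04 r05 r10 r12 r13 r14 r15 r20 r21 r23 r24 r25 r30 r31 r32 r34 r35 r40 r41 r42 r43 r45 r50 r51 r52 r53 r54 by auto
      have i6: "f (g 2) = g 4 \<Longrightarrow> f (g 4) = g 4" using m24 f4 r01 r02 r03 r04 r05 r10 r12 r13 r14 r15 r20 r21 r23 r24 r25 r30 r31 r32 r34 r35 r40 r41 r42 r43 r45 r50 r51 r52 r53 r54 by auto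
      have i7: "f (g 4) = g 2 \<Longrightarrow> f (g 2) = g 2" using m24 f2 r01 r02 r03 r04 r05 r10 r12 r13 r14 r15 r20 r21 r23 r24 r25 r30 r31 r32 r34 r35 r40 r41 r42 r43 r45 r50 r51 r52 r53 r54 by auto
      show "(if f (g 2) = g 4 then 1 else 0) + (if f (g 4) = g 2 then 1 else 0) + (if f (g 0) = g 2 then 1 else 0) \<le> (if f (g 5) = g 4 then 1 else 0) + (if f (g 0) = g 2 then (1::real) else 0)"
        using i1 i2 i3 i4 i5 i6 i7 n01 n02 n03 n04 n05 n10 n12 n13 n14 n15 n20 n21 n23 n24 n25 n30 n31 n32 n34 n35 n40 n41 n42 n43 n45 n50 n51 n52 n53 n54 by auto
    qed
  qed
  then show ?thesis using SM by blast
qed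

lemma caseS8:
  fixes g :: "nat \<Rightarrow> 'a::{finite,order}"
  assumes H: "\<forall>i\<in>{0..<6}. \<forall>j\<in>{0..<6}. (g i \<le> g j \<longleftrightarrow> i = j \<or> (i, j) \<in> S8_less)"
  shows "\<exists>Q :: 'a \<Rightarrow> 'a \<Rightarrow> real. stoch_mono_gen Q \<and> \<not> realizably_mono_gen Q"
proof -
  have le: "\<And>i j. i < 6 \<Longrightarrow> j < 6 \<Longrightarrow> (g i \<le> g j \<longleftrightarrow> i = j \<or> (i, j) \<in> S8_less)"
    using H by auto
  have r01: "\<not> g 0 \<le> g 1" using le[of 0 1] by (simp add: S8_less_def)
  have r02: "\<not> g 0 \<le> g 2" using le[of 0 2] by (simp add: S8_less_def)
  have r03: "\<not> g 0 \<le> g 3" using le[of 0 3] by (simp add: S8_less_def)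
  have r04: "g 0 \<le> g 4" using le[of 0 4] by (simp add: S8_less_def)
  have r05: "g 0 \<le> g 5" using le[of 0 5] by (simp add: S8_less_def)
  have r10: "\<not> g 1 \<le> g 0" using le[of 1 0] by (simp add: S8_less_def)
  have r12: "\<not> g 1 \<le> g 2" using le[of 1 2] by (simp add: S8_less_def)
  have r13: "g 1 \<le> g 3" using le[of 1 3] by (simp add: S8_less_def)
  have r14: "g 1 \<le> g 4" using le[of 1 4] by (simp add: S8_less_def)
  have r15: "g 1 \<le> g 5" using le[of 1 5] by (simp add: S8_less_def)
  have r20: "\<not> g 2 \<le> g 0" using le[of 2 0] by (simp add: S8_less_def)
  have r21: "\<not> g 2 \<le> g 1" using le[of 2 1] by (simp add: S8_less_def)
  have r23: "g 2 \<le> g 3" using le[of 2 3] by (simp add: S8_less_def)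
  have r24: "g 2 \<le> g 4" using le[of 2 4] by (simp add: S8_less_def)
  have r25: "\<not> g 2 \<le> g 5" using le[of 2 5] by (simp add: S8_less_def)
  have r30: "\<not> g 3 \<le> g 0" using le[of 3 0] by (simp add: S8_less_def)
  have r31: "\<not> g 3 \<le> g 1" using le[of 3 1] by (simp add: S8_less_def)
  have r32: "\<not> g 3 \<le> g 2" using le[of 3 2] by (simp add: S8_less_def)
  have r34: "\<not> g 3 \<le> g 4" using le[of 3 4] by (simp add: S8_less_def)
  have r35: "\<not> g 3 \<le> g 5" using le[of 3 5] by (simp add: S8_less_def)
  have r40: "\<not> g 4 \<le> g 0" using le[of 4 0] by (simp add: S8_less_def)
  have r41: "\<not> g 4 \<le> g 1" using le[of 4 1] by (simp add: S8_less_def)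
  have r42: "\<not> g 4 \<le> g 2" using le[of 4 2] by (simp add: S8_less_def)
  have r43: "\<not> g 4 \<le> g 3" using le[of 4 3] by (simp add: S8_less_def)
  have r45: "\<not> g 4 \<le> g 5" using le[of 4 5] by (simp add: S8_less_def)
  have r50: "\<not> g 5 \<le> g 0" using le[of 5 0] by (simp add: S8_less_def)
  have r51: "\<not> g 5 \<le> g 1" using le[of 5 1] by (simp add: S8_less_def)
  have r52: "\<not> g 5 \<le> g 2" using le[of 5 2] by (simp add: S8_less_def)
  have r53: "\<not> g 5 \<le> g 3" using le[of 5 3] by (simp add: S8_less_def)
  have r54: "\<not> g 5 \<le> g 4" using le[of 5 4] by (simp add: S8_less_def)
  have n01: "g 0 \<noteq> g 1" using r01 by auto
  have n02: "g 0 \<noteq> g 2" using r02 by auto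
  have n03: "g 0 \<noteq> g 3" using r03 by auto
  have n04: "g 0 \<noteq> g 4" using r40 by auto
  have n05: "g 0 \<noteq> g 5" using r50 by auto
  have n10: "g 1 \<noteq> g 0" using r10 by auto
  have n12: "g 1 \<noteq> g 2" using r12 by auto
  have n13: "g 1 \<noteq> g 3" using r31 by auto
  have n14: "g 1 \<noteq> g 4" using r41 by auto
  have n15: "g 1 \<noteq> g 5" using r51 by auto
  have n20: "g 2 \<noteq> g 0" using r20 by auto
  have n21: "g 2 \<noteq> g 1" using r21 by auto
  have n23: "g 2 \<noteq> g 3" using r32 by auto
  have n24: "g 2 \<noteq> g 4" using r42 by auto
  have n25: "g 2 \<noteq> g 5" using r25 by auto
  have n30: "g 3 \<noteq> g 0" using r30 by auto
  have n31: "g 3 \<noteq> g 1" using r31 by auto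
  have n32: "g 3 \<noteq> g 2" using r32 by auto
  have n34: "g 3 \<noteq> g 4" using r34 by auto
  have n35: "g 3 \<noteq> g 5" using r35 by auto
  have n40: "g 4 \<noteq> g 0" using r40 by auto
  have n41: "g 4 \<noteq> g 1" using r41 by auto
  have n42: "g 4 \<noteq> g 2" using r42 by auto
  have n43: "g 4 \<noteq> g 3" using r43 by auto
  have n45: "g 4 \<noteq> g 5" using r45 by auto
  have n50: "g 5 \<noteq> g 0" using r50 by auto
  have n51: "g 5 \<noteq> g 1" using r51 by auto
  have n52: "g 5 \<noteq> g 2" using r52 by auto
  have n53: "g 5 \<noteq> g 3" using r53 by auto
  have n54: "g 5 \<noteq> g 4" using r54 by auto
  define Q where "Q = tmpl (g 2) (g 3) (g 4)"
  have LH: "g 2 < g 3" using r23 n23 by (simp add: less_le)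
  have MH: "\<not> g 4 \<le> g 3" using r43 .
  have SM: "stoch_mono_gen Q" unfolding Q_def using tmpl_mono[OF LH MH] .
  have "\<not> realizably_mono_gen Q"
  proof
    assume RM: "realizably_mono_gen Q"
    show False
    proof (rule not_real_cert[OF RM, of "g 2" "g 3" "g 3" "g 2" "g 0" "g 2" "g 5" "g 2" "g 0" "g 2"])
      show "g 2 \<noteq> g 3" using n23 .
      show "g 3 \<noteq> g 2" using n32 .
      show "g 0 \<noteq> g 2" using n02 .
      show "g 5 \<noteq> g 2" using n52 .
      show "g 0 \<noteq> g 2" using n02 .
      show "Q (g 5) (g 2) + Q (g 0) (g 2) < Q (g 2) (g 3) + Q (g 3) (g 2) + Q (g 0) (g 2)"
        unfolding Q_def tmpl_def tp_def tq_def using r01 r02 r03 r04 r05 r10 r12 r13 r14 r15 r20 r21 r23 r24 r25 r30 r31 r32 r34 r35 r40 r41 r42 r43 r45 r50 r51 r52 r53 r54 n01 n02 n03 n04 n05 n10 n12 n13 n14 n15 n20 n21 n23 n24 n25 n30 n31 n32 n34 n35 n40 n41 n42 n43 n45 n50 n51 n52 n53 n54 by simp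
    next
      fix f :: "'a \<Rightarrow> 'a"
      assume m: "mono f" and sp: "\<And>x y. x \<noteq> y \<Longrightarrow> Q x y = 0 \<Longrightarrow> f x \<noteq> y"

      have f0: "f (g 0) = g 0 \<or> f (g 0) = g 2" using tmpl_supp[where L="g 2" and H="g 3" and M="g 4" and f=f and x="g 0", OF n23 sp[unfolded Q_def]] r01 r02 r03 r04 r05 r10 r12 r13 r14 r15 r20 r21 r23 r24 r25 r30 r31 r32 r34 r35 r40 r41 r42 r43 r45 r50 r51 r52 r53 r54 by (auto simp: tp_def tq_def)
      have f1: "f (g 1) = g 1 \<or> f (g 1) = g 2" using tmpl_supp[where L="g 2" and H="g 3" and M="g 4" and f=f and x="g 1", OF n23 sp[unfolded Q_def]] r01 r02 r03 r04 r05 r10 r12 r13 r14 r15 r20 r21 r23 r24 r25 r30 r31 r32 r34 r35 r40 r41 r42 r43 r45 r50 r51 r52 r53 r54 by (auto simp: tp_def tq_def)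
      have f2: "f (g 2) = g 2 \<or> f (g 2) = g 3" using tmpl_supp[where L="g 2" and H="g 3" and M="g 4" and f=f and x="g 2", OF n23 sp[unfolded Q_def]] r01 r02 r03 r04 r05 r10 r12 r13 r14 r15 r20 r21 r23 r24 r25 r30 r31 r32 r34 r35 r40 r41 r42 r43 r45 r50 r51 r52 r53 r54 by (auto simp: tp_def tq_def)
      have f3: "f (g 3) = g 3 \<or> f (g 3) = g 2" using tmpl_supp[where L="g 2" and H="g 3" and M="g 4" and f=f and x="g 3", OF n23 sp[unfolded Q_def]] r01 r02 r03 r04 r05 r10 r12 r13 r14 r15 r20 r21 r23 r24 r25 r30 r31 r32 r34 r35 r40 r41 r42 r43 r45 r50 r51 r52 r53 r54 by (auto simp: tp_def tq_def)
      have f4: "f (g 4) = g 4 \<or> f (g 4) = g 3" using tmpl_supp[where L="g 2" and H="g 3" and M="g 4" and f=f and x="g 4", OF n23 sp[unfolded Q_def]] r01 r02 r03 r04 r05 r10 r12 r13 r14 r15 r20 r21 r23 r24 r25 r30 r31 r32 r34 r35 r40 r41 r42 r43 r45 r50 r51 r52 r53 r54 by (auto simp: tp_def tq_def)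
      have f5: "f (g 5) = g 5 \<or> f (g 5) = g 2" using tmpl_supp[where L="g 2" and H="g 3" and M="g 4" and f=f and x="g 5", OF n23 sp[unfolded Q_def]] r01 r02 r03 r04 r05 r10 r12 r13 r14 r15 r20 r21 r23 r24 r25 r30 r31 r32 r34 r35 r40 r41 r42 r43 r45 r50 r51 r52 r53 r54 by (auto simp: tp_def tq_def)
      have m04: "f (g 0) \<le> f (g 4)" using m r04 by (simp add: monoD)
      have m05: "f (g 0) \<le> f (g 5)" using m r05 by (simp add: monoD)
      have m13: "f (g 1) \<le> f (g 3)" using m r13 by (simp add: monoD)
      have m14: "f (g 1) \<le> f (g 4)" using m r14 by (simp add: monoD)
      have m15: "f (g 1) \<le> f (g 5)" using m r15 by (simp add: monoD)
      have m23: "f (g 2) \<le> f (g 3)" using m r23 by (simp add: monoD)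
      have m24: "f (g 2) \<le> f (g 4)" using m r24 by (simp add: monoD)
      have i1: "f (g 2) = g 3 \<Longrightarrow> f (g 4) = g 3" using m24 f4 r01 r02 r03 r04 r05 r10 r12 r13 r14 r15 r20 r21 r23 r24 r25 r30 r31 r32 r34 r35 r40 r41 r42 r43 r45 r50 r51 r52 r53 r54 by auto
      have i2: "f (g 4) = g 3 \<Longrightarrow> f (g 0) = g 2" using m04 f0 r01 r02 r03 r04 r05 r10 r12 r13 r14 r15 r20 r21 r23 r24 r25 r30 r31 r32 r34 r35 r40 r41 r42 r43 r45 r50 r51 r52 r53 r54 by auto
      have i3: "f (g 0) = g 2 \<Longrightarrow> f (g 5) = g 2" using m05 f5 r01 r02 r03 r04 r05 r10 r12 r13 r14 r15 r20 r21 r23 r24 r25 r30 r31 r32 r34 r35 r40 r41 r42 r43 r45 r50 r51 r52 r53 r54 by auto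
      have i4: "f (g 3) = g 2 \<Longrightarrow> f (g 1) = g 2" using m13 f1 r01 r02 r03 r04 r05 r10 r12 r13 r14 r15 r20 r21 r23 r24 r25 r30 r31 r32 r34 r35 r40 r41 r42 r43 r45 r50 r51 r52 r53 r54 by auto
      have i5: "f (g 1) = g 2 \<Longrightarrow> f (g 5) = g 2" using m15 f5 r01 r02 r03 r04 r05 r10 r12 r13 r14 r15 r20 r21 r23 r24 r25 r30 r31 r32 r34 r35 r40 r41 r42 r43 r45 r50 r51 r52 r53 r54 by auto
      have i6: "f (g 2) = g 3 \<Longrightarrow> f (g 3) = g 3" using m23 f3 r01 r02 r03 r04 r05 r10 r12 r13 r14 r15 r20 r21 r23 r24 r25 r30 r31 r32 r34 r35 r40 r41 r42 r43 r45 r50 r51 r52 r53 r54 by auto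
      show "(if f (g 2) = g 3 then 1 else 0) + (if f (g 3) = g 2 then 1 else 0) + (if f (g 0) = g 2 then 1 else 0) \<le> (if f (g 5) = g 2 then 1 else 0) + (if f (g 0) = g 2 then (1::real) else 0)"
        using i1 i2 i3 i4 i5 i6 n01 n02 n03 n04 n05 n10 n12 n13 n14 n15 n20 n21 n23 n24 n25 n30 n31 n32 n34 n35 n40 n41 n42 n43 n45 n50 n51 n52 n53 n54 by auto
    qed
  qed
  then show ?thesis using SM by blast
qed


theorem proposition4p3:
  assumes "has_induced_subposet S6_less TYPE('a::{finite,order})
         \<or> has_induced_subposet S7_less TYPE('a)
         \<or> has_induced_subposet S8_less TYPE('a)"
  shows "\<exists>Q :: 'a \<Rightarrow> 'a \<Rightarrow> real. stoch_mono_gen Q \<and> \<not> realizably_mono_gen Q"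
proof -
  from assms consider (a) "has_induced_subposet S6_less TYPE('a)" | (b) "has_induced_subposet S7_less TYPE('a)"
    | (c) "has_induced_subposet S8_less TYPE('a)" by blast
  then show ?thesis
  proof cases
    case a
    then obtain g :: "nat \<Rightarrow> 'a" where H: "\<forall>i\<in>{0..<6}. \<forall>j\<in>{0..<6}. (g i \<le> g j \<longleftrightarrow> i = j \<or> (i, j) \<in> S6_less)"
      unfolding has_induced_subposet_def by blast
    show ?thesis by (rule caseS6[OF H])
  next
    case b
    then obtain g :: "nat \<Rightarrow> 'a" where H: "\<forall>i\<in>{0..<6}. \<forall>j\<in>{0..<6}. (g i \<le> g j \<longleftrightarrow> i = j \<or> (i, j) \<in> S7_less)"
      unfolding has_induced_subposet_def by blast
    show ?thesis by (rule caseS7[OF H])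
  next
    case c
    then obtain g :: "nat \<Rightarrow> 'a" where H: "\<forall>i\<in>{0..<6}. \<forall>j\<in>{0..<6}. (g i \<le> g j \<longleftrightarrow> i = j \<or> (i, j) \<in> S8_less)"
      unfolding has_induced_subposet_def by blast
    show ?thesis by (rule caseS8[OF H])
  qed
qed

end
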